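(* Fix $0<\eta<1$ and constants $A_\eta,a_\eta>0$. Consider any $D\ge2$ and any family $\{\Phi_{j,\kappa}\}_{j\in J,\kappa\in\mathbb{Z}_{\ge0}}$ of functions $\Phi_{j,\kappa}\in C^\infty(\mathbb{R})$ supported in $[-D/2,D/2]$ with $\|\Phi_{j,\kappa}\|_{L^2(\mathbb{R})}=1$, together with numbers $0<\delta_j\le D$ ($j\in J$), such that, with $\xi_{j,\kappa}=\frac{2\kappa+1}{4\delta_j}$, for all $j,\kappa$ and all $\xi\in\mathbb{R}$ $$ |\hat\Phi_{j,\kappa}(\xi)|\le \delta_j^{1/2}A_\eta\Big(\exp\big(-a_\eta(\delta_j|\xi-\xi_{j,\kappa}|)^{1-\eta}\big)+\exp\big(-a_\eta(\delta_j|\xi+\xi_{j,\kappa}|)^{1-\eta}\big)\Big). $$ Then for all $T_1,T_2\ge0$ and $n\ge0$ there exist constants $C,c>0$, depending only on $T_1,T_2,n,\eta,A_\eta,a_\eta$ (not on $D$, the family, $j$ or $\kappa$), such that whenever $\kappa<\delta_j-C\log^{1/(1-\eta)}(D)$ and $|\xi|>\frac12$, $$ |\hat\Phi_{j,\kappa}^{(n)}(\xi)|\le \frac{c}{D^{T_1}|\xi|^{T_2}}. $$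
   Context: The Fourier transform is $\hat \Phi(\xi)=\int_{\mathbb{R}} \Phi(x)e^{-2\pi i x\xi}\,dx$, and $\hat\Phi^{(n)}$ denotes its $n$-th derivative ($\hat\Phi^{(0)}=\hat\Phi$). *)

theory Defs
  imports "HOL-Analysis.Analysis"
begin

definition fourier :: "(real \<Rightarrow> complex) \<Rightarrow> real \<Rightarrow> complex" where
  "fourier \<Phi> \<xi> = integral UNIV (\<lambda>x. \<Phi> x * cis (- 2 * pi * x * \<xi>))"

definition higher_vderiv :: "nat \<Rightarrow> (real \<Rightarrow> complex) \<Rightarrow> real \<Rightarrow> complex" where
  "higher_vderiv n f = ((\<lambda>g x. vector_derivative g (at x)) ^^ n) f"

definition smooth_fun :: "(real \<Rightarrow> complex) \<Rightarrow> bool" where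
  "smooth_fun f \<longleftrightarrow> (\<forall>k x. higher_vderiv k f differentiable (at x))"

end

theory Submission imports Defs begin

lemma cis_vd:
  "((\<lambda>\<xi>::real. cis (- 2 * pi * x * \<xi>)) has_vector_derivative
     (- 2 * pi * \<i> * complex_of_real x) * cis (- 2 * pi * x * \<xi>)) (at \<xi> within U)"
proof -
  have "((\<lambda>\<xi>::real. - 2 * pi * x * \<xi>) has_derivative (\<lambda>t. (- 2 * pi * x) * t)) (at \<xi> within U)"
    by (auto intro!: derivative_eq_intros)
  from has_derivative_cis[OF this] show ?thesis
    unfolding has_vector_derivative_def
    by (simp add: scaleR_conv_of_real algebra_simps)
qed

definition G :: "(real \<Rightarrow> complex) \<Rightarrow> real \<Rightarrow> nat \<Rightarrow> real \<Rightarrow> complex" where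
  "G \<Phi> R k \<xi> = integral {-R..R} (\<lambda>x. (- 2 * pi * \<i> * complex_of_real x) ^ k * \<Phi> x * cis (- 2 * pi * x * \<xi>))"

lemma G_deriv:
  assumes "continuous_on UNIV \<Phi>"
  shows "(G \<Phi> R k has_vector_derivative G \<Phi> R (Suc k) \<xi>) (at \<xi>)"
proof -
  have "((\<lambda>\<xi>. integral (cbox (-R) R) (\<lambda>x. (- 2 * pi * \<i> * complex_of_real x) ^ k * \<Phi> x * cis (- 2 * pi * x * \<xi>)))
     has_vector_derivative integral (cbox (-R) R) (\<lambda>x. (- 2 * pi * \<i> * complex_of_real x) ^ Suc k * \<Phi> x * cis (- 2 * pi * x * \<xi>))) (at \<xi> within UNIV)"
  proof (rule leibniz_rule_vector_derivative[where fx = "\<lambda>\<xi> x. (- 2 * pi * \<i> * complex_of_real x) ^ Suc k * \<Phi> x * cis (- 2 * pi * x * \<xi>)"])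
    fix \<xi>' x :: real
    show "((\<lambda>\<xi>. (- 2 * pi * \<i> * complex_of_real x) ^ k * \<Phi> x * cis (- 2 * pi * x * \<xi>)) has_vector_derivative
          (- 2 * pi * \<i> * complex_of_real x) ^ Suc k * \<Phi> x * cis (- 2 * pi * x * \<xi>')) (at \<xi>' within UNIV)"
      using has_vector_derivative_mult_right[OF cis_vd[of x \<xi>' UNIV], of "(- 2 * pi * \<i> * complex_of_real x) ^ k * \<Phi> x"]
      by (simp add: algebra_simps)
  next
    fix \<xi>' :: real
    show "(\<lambda>x. (- 2 * pi * \<i> * complex_of_real x) ^ k * \<Phi> x * cis (- 2 * pi * x * \<xi>')) integrable_on cbox (- R) R"
      by (intro integrable_continuous continuous_intros continuous_on_subset[OF assms]) auto
  next
    have "continuous_on (UNIV \<times> cbox (-R) R) (\<lambda>p. \<Phi> (snd p))"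
      by (intro continuous_on_compose2[OF assms] continuous_intros) auto
    then show "continuous_on (UNIV \<times> cbox (- R) R) (\<lambda>(\<xi>, x). (- 2 * pi * \<i> * complex_of_real x) ^ Suc k * \<Phi> x * cis (- 2 * pi * x * \<xi>))"
      by (simp add: split_beta) (intro continuous_intros; simp)
  qed auto
  then show ?thesis unfolding G_def by simp
qed


lemma fourier_eq_G:
  assumes supp: "\<And>x. \<bar>x\<bar> > R \<Longrightarrow> \<Phi> x = 0"
  shows "fourier \<Phi> \<xi> = G \<Phi> R 0 \<xi>"
proof -
  have "fourier \<Phi> \<xi> = integral UNIV (\<lambda>x. if x \<in> {-R..R} then \<Phi> x * cis (- 2 * pi * x * \<xi>) else 0)"
    unfolding fourier_def
    by (rule arg_cong[where f="integral UNIV"]) (force simp: supp abs_le_iff intro!: ext)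
  also have "\<dots> = G \<Phi> R 0 \<xi>" unfolding integral_restrict_UNIV G_def by simp
  finally show ?thesis .
qed

lemma higher_vderiv_Suc: "higher_vderiv (Suc k) f = (\<lambda>x. vector_derivative (higher_vderiv k f) (at x))"
  unfolding higher_vderiv_def by simp

lemma higher_vderiv_fourier:
  assumes "continuous_on UNIV \<Phi>" and supp: "\<And>x. \<bar>x\<bar> > R \<Longrightarrow> \<Phi> x = 0"
  shows "higher_vderiv k (fourier \<Phi>) = G \<Phi> R k"
proof (induction k)
  case 0
  show ?case unfolding higher_vderiv_def using fourier_eq_G[OF supp] by auto
next
  case (Suc k)
  show ?case unfolding higher_vderiv_Suc Suc
    using G_deriv[OF assms(1)] vector_derivative_at by blast
qed


lemma Henstock_Kurzweil_Integration_integral_sum_ref: True by simp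

lemma findiff_identity:
  assumes "continuous_on UNIV \<Phi>" and supp: "\<And>x. \<bar>x\<bar> > R \<Longrightarrow> \<Phi> x = 0"
  shows "(\<Sum>k\<le>n. of_nat (n choose k) * (-1) ^ (n - k) * fourier \<Phi> (\<xi> + real k * \<sigma>))
       = integral {-R..R} (\<lambda>x. \<Phi> x * cis (- 2 * pi * x * \<xi>) * (cis (- 2 * pi * x * \<sigma>) - 1) ^ n)"
proof -
  have pt: "\<Phi> x * cis (- 2 * pi * x * \<xi>) * (cis (- 2 * pi * x * \<sigma>) - 1) ^ n
     = (\<Sum>k\<le>n. of_nat (n choose k) * (-1) ^ (n - k) * (\<Phi> x * cis (- 2 * pi * x * (\<xi> + real k * \<sigma>))))" for x
  proof -
    have "(cis (- 2 * pi * x * \<sigma>) - 1) ^ n = (cis (- 2 * pi * x * \<sigma>) + (-1)) ^ n" by simp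
    also have "\<dots> = (\<Sum>k\<le>n. of_nat (n choose k) * cis (- 2 * pi * x * \<sigma>) ^ k * (-1) ^ (n - k))"
      by (rule binomial_ring)
    finally have e: "(cis (- 2 * pi * x * \<sigma>) - 1) ^ n = (\<Sum>k\<le>n. of_nat (n choose k) * cis (- 2 * pi * x * \<sigma>) ^ k * (-1) ^ (n - k))" .
    have c: "cis (- 2 * pi * x * \<xi>) * cis (- 2 * pi * x * \<sigma>) ^ k = cis (- 2 * pi * x * (\<xi> + real k * \<sigma>))" for k
    proof -
      have "cis (- 2 * pi * x * \<sigma>) ^ k = cis (real k * (- 2 * pi * x * \<sigma>))" by (rule Complex.DeMoivre)
      then have "cis (- 2 * pi * x * \<xi>) * cis (- 2 * pi * x * \<sigma>) ^ k = cis (- 2 * pi * x * \<xi> + real k * (- 2 * pi * x * \<sigma>))"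
        by (simp only: cis_mult)
      also have "- 2 * pi * x * \<xi> + real k * (- 2 * pi * x * \<sigma>) = - 2 * pi * x * (\<xi> + real k * \<sigma>)"
        by (simp add: algebra_simps)
      finally show ?thesis .
    qed
    show ?thesis unfolding e sum_distrib_left
      by (rule sum.cong[OF refl]) (simp only: c[symmetric], simp add: algebra_simps)
  qed
  have int: "(\<lambda>x. \<Phi> x * cis (- 2 * pi * x * y)) integrable_on {-R..R}" for y
    by (intro integrable_continuous_interval continuous_intros continuous_on_subset[OF assms(1)]) auto
  have "integral {-R..R} (\<lambda>x. \<Phi> x * cis (- 2 * pi * x * \<xi>) * (cis (- 2 * pi * x * \<sigma>) - 1) ^ n)
     = integral {-R..R} (\<lambda>x. \<Sum>k\<le>n. of_nat (n choose k) * (-1) ^ (n - k) * (\<Phi> x * cis (- 2 * pi * x * (\<xi> + real k * \<sigma>))))"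
    unfolding pt ..
  also have "\<dots> = (\<Sum>k\<le>n. integral {-R..R} (\<lambda>x. of_nat (n choose k) * (-1) ^ (n - k) * (\<Phi> x * cis (- 2 * pi * x * (\<xi> + real k * \<sigma>)))))"
    by (rule integral_sum) (auto intro!: integrable_continuous_interval continuous_intros continuous_on_subset[OF assms(1)])
  also have "\<dots> = (\<Sum>k\<le>n. of_nat (n choose k) * (-1) ^ (n - k) * fourier \<Phi> (\<xi> + real k * \<sigma>))"
    by (rule sum.cong[OF refl], subst integral_mult_right) (simp add: fourier_eq_G[OF supp] G_def)
  finally show ?thesis by simp
qed


lemma powdiff:
  fixes z w :: complex
  assumes "norm z \<le> r" "norm w \<le> r" "r > 0"
  shows "norm (z ^ n - w ^ n) \<le> n * r ^ (n - 1) * norm (z - w)"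
proof -
  have "norm ((z / r) ^ n - (w / r) ^ n) \<le> n * norm (z / r - w / r)"
    by (rule norm_power_diff) (use assms in \<open>auto simp: norm_divide\<close>)
  moreover have "(z / r) ^ n - (w / r) ^ n = (z ^ n - w ^ n) / r ^ n"
    by (simp add: power_divide diff_divide_distrib)
  moreover have "z / r - w / r = (z - w) / r" by (simp add: diff_divide_distrib)
  ultimately have "norm (z ^ n - w ^ n) / r ^ n \<le> n * (norm (z - w) / r)"
    using assms by (simp add: norm_divide norm_power)
  then have "norm (z ^ n - w ^ n) \<le> n * (norm (z - w) / r) * r ^ n"
    using assms by (simp add: field_simps)
  also have "\<dots> \<le> n * r ^ (n - 1) * norm (z - w)"
  proof (cases n)
    case (Suc m)
    then show ?thesis using assms by (simp add: field_simps)
  qed simp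
  finally show ?thesis .
qed

lemma cis_taylor0: "norm (cis \<phi> - 1) \<le> \<bar>\<phi>\<bar>"
  using Taylor_exp[of "\<i> * complex_of_real \<phi>" 0] by (simp add: cis_conv_exp norm_mult)

lemma cis_taylor1: "norm (cis \<phi> - 1 - \<i> * complex_of_real \<phi>) \<le> \<phi>\<^sup>2"
  using Taylor_exp[of "\<i> * complex_of_real \<phi>" 1] by (simp add: cis_conv_exp norm_mult power2_eq_square diff_diff_add)

lemma pointwise:
  assumes "\<bar>\<phi>\<bar> \<le> r" "r > 0"
  shows "norm ((\<i> * complex_of_real \<phi>) ^ n - (cis \<phi> - 1) ^ n) \<le> n * r ^ (n + 1)"
proof -
  have "norm ((\<i> * complex_of_real \<phi>) ^ n - (cis \<phi> - 1) ^ n) \<le> n * r ^ (n - 1) * norm (\<i> * complex_of_real \<phi> - (cis \<phi> - 1))"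
    by (rule powdiff) (use assms cis_taylor0[of \<phi>] in \<open>auto simp: norm_mult\<close>)
  also have "norm (\<i> * complex_of_real \<phi> - (cis \<phi> - 1)) = norm (cis \<phi> - 1 - \<i> * complex_of_real \<phi>)"
    by (simp add: norm_minus_commute)
  also have "\<dots> \<le> r\<^sup>2"
  proof -
    have "\<phi>\<^sup>2 \<le> r\<^sup>2" using assms by (metis abs_ge_zero power2_abs power_mono)
    then show ?thesis using cis_taylor1[of \<phi>] by linarith
  qed
  finally have "norm ((\<i> * complex_of_real \<phi>) ^ n - (cis \<phi> - 1) ^ n) \<le> n * r ^ (n - 1) * r\<^sup>2"
    using assms by (simp add: mult_left_mono)
  also have "\<dots> = n * r ^ (n + 1)"
    by (cases n) (simp_all add: power2_eq_square)
  finally show ?thesis .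
qed


lemma deriv_estimate:
  assumes cont: "continuous_on UNIV \<Phi>" and supp: "\<And>x. \<bar>x\<bar> > R \<Longrightarrow> \<Phi> x = 0"
    and R: "R > 0" and s: "\<sigma> > 0"
  shows "\<sigma> ^ n * cmod (G \<Phi> R n \<xi>) \<le> (\<Sum>k\<le>n. real (n choose k) * cmod (fourier \<Phi> (\<xi> + real k * \<sigma>)))
           + n * (2 * pi * \<sigma> * R) ^ (n + 1) * integral {-R..R} (\<lambda>x. cmod (\<Phi> x))"
proof -
  define r where "r = 2 * pi * \<sigma> * R"
  have r: "r > 0" using R s by (simp add: r_def)
  define P where "P = (\<lambda>x. \<Phi> x * cis (- 2 * pi * x * \<xi>))"
  define ph where "ph = (\<lambda>x::real. - 2 * pi * x * \<sigma>)"
  have contP: "continuous_on {-R..R} P" unfolding P_def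
    by (intro continuous_intros continuous_on_subset[OF cont]) auto
  have int1: "(\<lambda>x. (\<i> * complex_of_real (ph x)) ^ n * P x) integrable_on {-R..R}"
    unfolding ph_def by (intro integrable_continuous_interval continuous_intros contP)
  have int2: "(\<lambda>x. (cis (ph x) - 1) ^ n * P x) integrable_on {-R..R}"
    unfolding ph_def by (intro integrable_continuous_interval continuous_intros contP)
  have e1: "complex_of_real (\<sigma> ^ n) * G \<Phi> R n \<xi> = integral {-R..R} (\<lambda>x. (\<i> * complex_of_real (ph x)) ^ n * P x)"
    unfolding G_def integral_mult_right[symmetric]
  proof (rule arg_cong[where f="integral {-R..R}"], rule ext)
    fix x
    have "complex_of_real (\<sigma> ^ n) * (- 2 * pi * \<i> * complex_of_real x) ^ n = (\<i> * complex_of_real (ph x)) ^ n"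
      unfolding ph_def of_real_power power_mult_distrib[symmetric] by (simp add: algebra_simps)
    then show "complex_of_real (\<sigma> ^ n) * ((- 2 * pi * \<i> * complex_of_real x) ^ n * \<Phi> x * cis (- 2 * pi * x * \<xi>))
       = (\<i> * complex_of_real (ph x)) ^ n * P x"
      unfolding P_def by (metis mult.assoc)
  qed
  have e2: "(\<Sum>k\<le>n. of_nat (n choose k) * (-1) ^ (n - k) * fourier \<Phi> (\<xi> + real k * \<sigma>))
       = integral {-R..R} (\<lambda>x. (cis (ph x) - 1) ^ n * P x)"
  proof -
    have "(\<Sum>k\<le>n. of_nat (n choose k) * (-1) ^ (n - k) * fourier \<Phi> (\<xi> + real k * \<sigma>))
       = integral {-R..R} (\<lambda>x. \<Phi> x * cis (- 2 * pi * x * \<xi>) * (cis (- 2 * pi * x * \<sigma>) - 1) ^ n)"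
      by (rule findiff_identity[OF cont supp])
    also have "\<dots> = integral {-R..R} (\<lambda>x. (cis (ph x) - 1) ^ n * P x)"
      unfolding P_def ph_def by (rule arg_cong[where f="integral {-R..R}"], rule ext, rule mult.commute)
    finally show ?thesis .
  qed
  have bnd: "norm (integral {-R..R} (\<lambda>x. (\<i> * complex_of_real (ph x)) ^ n * P x) - integral {-R..R} (\<lambda>x. (cis (ph x) - 1) ^ n * P x))
      \<le> integral {-R..R} (\<lambda>x. n * r ^ (n + 1) * cmod (\<Phi> x))"
  proof -
    have "integral {-R..R} (\<lambda>x. (\<i> * complex_of_real (ph x)) ^ n * P x) - integral {-R..R} (\<lambda>x. (cis (ph x) - 1) ^ n * P x)
       = integral {-R..R} (\<lambda>x. ((\<i> * complex_of_real (ph x)) ^ n - (cis (ph x) - 1) ^ n) * P x)"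
      using integral_diff[OF int1 int2] by (simp add: algebra_simps)
    also have "norm \<dots> \<le> integral {-R..R} (\<lambda>x. n * r ^ (n + 1) * cmod (\<Phi> x))"
    proof (rule integral_norm_bound_integral)
      show "(\<lambda>x. ((\<i> * complex_of_real (ph x)) ^ n - (cis (ph x) - 1) ^ n) * P x) integrable_on {- R..R}"
        unfolding ph_def by (intro integrable_continuous_interval continuous_intros contP)
      show "(\<lambda>x. real n * r ^ (n + 1) * cmod (\<Phi> x)) integrable_on {- R..R}"
        by (intro integrable_continuous_interval continuous_intros continuous_on_subset[OF cont]) auto
    next
      fix x assume x: "x \<in> {-R..R}"
      have "\<bar>ph x\<bar> \<le> r" using x s unfolding ph_def r_def
        by (auto simp: abs_mult intro!: mult_left_mono)
      from pointwise[OF this r, of n]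
      show "norm (((\<i> * complex_of_real (ph x)) ^ n - (cis (ph x) - 1) ^ n) * P x) \<le> real n * r ^ (n + 1) * cmod (\<Phi> x)"
        unfolding P_def norm_mult by (simp add: mult_right_mono)
    qed
    finally show ?thesis .
  qed
  have bnd2: "norm (\<Sum>k\<le>n. of_nat (n choose k) * (-1) ^ (n - k) * fourier \<Phi> (\<xi> + real k * \<sigma>))
      \<le> (\<Sum>k\<le>n. real (n choose k) * cmod (fourier \<Phi> (\<xi> + real k * \<sigma>)))"
    by (rule order_trans[OF norm_sum]) (simp add: norm_mult norm_power)
  have "\<sigma> ^ n * cmod (G \<Phi> R n \<xi>) = norm (complex_of_real (\<sigma> ^ n) * G \<Phi> R n \<xi>)"
    using s by (simp add: norm_mult norm_power)
  also have "\<dots> \<le> norm (\<Sum>k\<le>n. of_nat (n choose k) * (-1) ^ (n - k) * fourier \<Phi> (\<xi> + real k * \<sigma>))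
      + integral {-R..R} (\<lambda>x. n * r ^ (n + 1) * cmod (\<Phi> x))"
    unfolding e1 e2 using bnd norm_triangle_sub[of "integral {-R..R} (\<lambda>x. (\<i> * complex_of_real (ph x)) ^ n * P x)" "integral {-R..R} (\<lambda>x. (cis (ph x) - 1) ^ n * P x)"]
    by linarith
  also have "integral {-R..R} (\<lambda>x. n * r ^ (n + 1) * cmod (\<Phi> x)) = n * r ^ (n + 1) * integral {-R..R} (\<lambda>x. cmod (\<Phi> x))"
    by simp
  finally show ?thesis using bnd2 unfolding r_def by linarith
qed

lemma L1_bound:
  assumes cont: "continuous_on UNIV \<Phi>" and supp: "\<And>x. \<bar>x\<bar> > R \<Longrightarrow> \<Phi> x = 0"
    and R: "R > 0" and L2: "integral UNIV (\<lambda>x. (cmod (\<Phi> x))\<^sup>2) = 1"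
  shows "integral {-R..R} (\<lambda>x. cmod (\<Phi> x)) \<le> R + 1/2"
proof -
  have c2: "continuous_on {-R..R} (\<lambda>x. (cmod (\<Phi> x))\<^sup>2)"
    by (intro continuous_intros continuous_on_subset[OF cont]) auto
  have "integral {-R..R} (\<lambda>x. (cmod (\<Phi> x))\<^sup>2) = integral UNIV (\<lambda>x. if x \<in> {-R..R} then (cmod (\<Phi> x))\<^sup>2 else 0)"
    unfolding integral_restrict_UNIV ..
  also have "\<dots> = integral UNIV (\<lambda>x. (cmod (\<Phi> x))\<^sup>2)"
    by (rule arg_cong[where f="integral UNIV"]) (force simp: supp abs_le_iff intro!: ext)
  finally have I2: "integral {-R..R} (\<lambda>x. (cmod (\<Phi> x))\<^sup>2) = 1" using L2 by simp
  have "integral {-R..R} (\<lambda>x. cmod (\<Phi> x)) \<le> integral {-R..R} (\<lambda>x. 1/2 + (cmod (\<Phi> x))\<^sup>2 / 2)"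
  proof (rule integral_le)
    show "(\<lambda>x. cmod (\<Phi> x)) integrable_on {- R..R}"
      by (intro integrable_continuous_interval continuous_intros continuous_on_subset[OF cont]) auto
    show "(\<lambda>x. 1 / 2 + (cmod (\<Phi> x))\<^sup>2 / 2) integrable_on {- R..R}"
      by (intro integrable_continuous_interval continuous_intros continuous_on_subset[OF cont]) auto
    fix x
    have "0 \<le> (cmod (\<Phi> x) - 1)\<^sup>2" by simp
    then show "cmod (\<Phi> x) \<le> 1 / 2 + (cmod (\<Phi> x))\<^sup>2 / 2" by (simp add: power2_eq_square algebra_simps)
  qed
  also have "\<dots> = integral {-R..R} (\<lambda>x. 1/2) + integral {-R..R} (\<lambda>x. (cmod (\<Phi> x))\<^sup>2 / 2)"
    by (rule integral_add) (auto intro!: integrable_continuous_interval continuous_intros continuous_on_subset[OF cont])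
  also have "\<dots> = R + 1/2" using R I2 by simp
  finally show ?thesis .
qed


lemma exp_ge_pow:
  fixes y :: real assumes "0 \<le> y" shows "y ^ m / fact m \<le> exp y"
proof -
  obtain t where t: "exp y = (\<Sum>i<Suc m. y ^ i / fact i) + exp t / fact (Suc m) * y ^ Suc m"
    using Maclaurin_exp_le[of y "Suc m"] by blast
  have "y ^ m / fact m \<le> (\<Sum>i<Suc m. y ^ i / fact i)"
    by (rule member_le_sum[where f="\<lambda>i. y ^ i / fact i", of m "{..<Suc m}"]) (use assms in auto)
  moreover have "0 \<le> exp t / fact (Suc m) * y ^ Suc m" using assms by simp
  ultimately show ?thesis using t by linarith
qed

lemma exp_poly:
  fixes b p N :: real
  assumes b: "b > 0" and p: "p > 0" and N: "N \<ge> 0"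
  shows "\<exists>K>0. \<forall>u\<ge>0. (1 + u) powr N * exp (- b * u powr p) \<le> K"
proof -
  define m where "m = nat \<lceil>N / p\<rceil>"
  have mN: "N \<le> real m * p" unfolding m_def using p
    by (metis divide_le_eq_numeral1(1) le_nat_iff less_eq_real_def linorder_not_less of_nat_le_iff pos_divide_le_eq real_nat_ceiling_ge)
  define K where "K = 2 powr N * (1 + fact m / b ^ m)"
  have K: "K > 0" unfolding K_def using b by (simp add: add_pos_nonneg)
  have "(1 + u) powr N * exp (- b * u powr p) \<le> K" if u: "u \<ge> 0" for u
  proof (cases "u \<le> 1")
    case True
    have "(1 + u) powr N \<le> 2 powr N" using True u N by (intro powr_mono2) auto
    moreover have "exp (- b * u powr p) \<le> 1" using b u by simp
    ultimately have "(1 + u) powr N * exp (- b * u powr p) \<le> 2 powr N * 1"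
      by (intro mult_mono) auto
    also have "\<dots> \<le> K" unfolding K_def using b by simp
    finally show ?thesis .
  next
    case False
    then have u1: "u \<ge> 1" by simp
    define y where "y = b * u powr p"
    have y0: "y \<ge> 0" unfolding y_def using b u by simp
    have "(1 + u) powr N \<le> (2 * u) powr N" using u1 N by (intro powr_mono2) auto
    also have "\<dots> = 2 powr N * u powr N" using u by (simp add: powr_mult)
    also have "u powr N \<le> u powr (real m * p)" using u1 mN by (intro powr_mono) auto
    also have "u powr (real m * p) = (u powr p) ^ m" using u1
      by (simp add: powr_powr[symmetric] powr_realpow mult.commute)
    also have "(u powr p) ^ m = y ^ m / b ^ m" unfolding y_def using b
      by (simp add: power_mult_distrib)
    finally have h1: "(1 + u) powr N \<le> 2 powr N * (y ^ m / b ^ m)" by simp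
    have "(1 + u) powr N * exp (- b * u powr p) \<le> 2 powr N * (y ^ m / b ^ m) * exp (- y)"
    proof -
      have "exp (- b * u powr p) = exp (- y)" by (simp add: y_def)
      then show ?thesis using mult_right_mono[OF h1, of "exp (- y)"] by simp
    qed
    also have "y ^ m * exp (- y) \<le> fact m"
    proof -
      have "y ^ m / fact m \<le> exp y" by (rule exp_ge_pow[OF y0])
      then have "y ^ m \<le> fact m * exp y" by (simp add: divide_le_eq mult.commute)
      then have "y ^ m * exp (- y) \<le> fact m * exp y * exp (- y)" by (intro mult_right_mono) auto
      also have "\<dots> = fact m" by (simp add: exp_minus)
      finally show ?thesis .
    qed
    then have "2 powr N * (y ^ m / b ^ m) * exp (- y) \<le> 2 powr N * (fact m / b ^ m)"
      using b by (simp add: divide_right_mono mult_left_mono)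
    also have "\<dots> \<le> K" unfolding K_def by (simp add: distrib_left)
    finally show ?thesis by linarith
  qed
  with K show ?thesis by blast
qed


lemma claimA:
  fixes D \<delta> p a A C t \<xi> s F :: real and \<kappa> :: nat
  assumes D: "D \<ge> 2" and \<delta>: "0 < \<delta>" "\<delta> \<le> D" and p: "p > 0" and a: "a > 0" and A: "A > 0"
    and C: "C > 0" and CL: "C * ln D powr (1 / p) \<ge> 2"
    and \<kappa>: "real \<kappa> < \<delta> - C * ln D powr (1 / p)"
    and t: "\<bar>\<xi>\<bar> = t" "t > 1/2" and s: "0 \<le> s" "s \<le> 1 / (4 * D)"
    and F: "F \<le> sqrt \<delta> * A * (exp (- a * (\<delta> * \<bar>(\<xi> + s) - (2 * real \<kappa> + 1) / (4 * \<delta>)\<bar>) powr p)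
                 + exp (- a * (\<delta> * \<bar>(\<xi> + s) + (2 * real \<kappa> + 1) / (4 * \<delta>)\<bar>) powr p))"
  shows "F \<le> 2 * sqrt D * A * exp (- (a/2) * (2 * t - 1) powr p) * D powr (- (a/2) * (C/4) powr p)"
proof -
  define L where "L = ln D powr (1 / p)"
  have lnD: "ln D > 0" using D by simp
  have L0: "L \<ge> 0" unfolding L_def by simp
  have \<kappa>L: "real \<kappa> < \<delta> - C * L" using \<kappa> unfolding L_def .
  have CLL: "C * L \<ge> 2" using CL unfolding L_def .
  have Lp: "L powr p = ln D" unfolding L_def using lnD p by (simp add: powr_powr)
  define q where "q = (2 * real \<kappa> + 1) / (4 * \<delta>)"
  have q0: "q \<ge> 0" unfolding q_def using \<delta> by simp
  have dq: "\<delta> * q = (2 * real \<kappa> + 1) / 4" unfolding q_def using \<delta> by simp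
  have s1: "\<delta> * s \<le> 1/4"
  proof -
    have "\<delta> * s \<le> D * (1 / (4 * D))" using \<delta> s by (intro mult_mono) auto
    then show ?thesis using D by simp
  qed
  have absxi: "\<bar>\<xi> + s\<bar> \<ge> t - s" using t s by argo
  define X where "X = \<delta> * (t - 1/2) + (C * L - 1) / 2"
  have \<delta>2: "\<delta> \<ge> 2" using \<kappa>L CLL by linarith
  have Zge: "\<delta> * \<bar>(\<xi> + s) - q\<bar> \<ge> X" "\<delta> * \<bar>(\<xi> + s) + q\<bar> \<ge> X"
  proof -
    have "\<delta> * \<bar>\<xi> + s\<bar> \<ge> \<delta> * (t - s)" using absxi \<delta> by (intro mult_left_mono) auto
    moreover have "\<bar>(\<xi> + s) - q\<bar> \<ge> \<bar>\<xi> + s\<bar> - q" "\<bar>(\<xi> + s) + q\<bar> \<ge> \<bar>\<xi> + s\<bar> - q" using q0 by argo+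
    then have "\<delta> * \<bar>(\<xi> + s) - q\<bar> \<ge> \<delta> * (\<bar>\<xi> + s\<bar> - q)" "\<delta> * \<bar>(\<xi> + s) + q\<bar> \<ge> \<delta> * (\<bar>\<xi> + s\<bar> - q)"
      using \<delta> by (intro mult_left_mono; simp)+
    moreover have "\<delta> * (\<bar>\<xi> + s\<bar> - q) = \<delta> * \<bar>\<xi> + s\<bar> - (2 * real \<kappa> + 1) / 4" using dq by (simp add: algebra_simps)
    moreover have "\<delta> * (t - s) = \<delta> * t - \<delta> * s" by (simp add: algebra_simps)
    moreover have "X = \<delta> * t - \<delta> / 2 + (C * L - 1) / 2" unfolding X_def by (simp add: algebra_simps)
    ultimately have "\<delta> * \<bar>(\<xi> + s) - q\<bar> \<ge> X \<and> \<delta> * \<bar>(\<xi> + s) + q\<bar> \<ge> X"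
      using s1 \<kappa>L by argo
    then show "\<delta> * \<bar>(\<xi> + s) - q\<bar> \<ge> X" "\<delta> * \<bar>(\<xi> + s) + q\<bar> \<ge> X" by auto
  qed
  have X1: "X \<ge> 2 * t - 1"
  proof -
    have "\<delta> * (t - 1/2) \<ge> 2 * (t - 1/2)" using \<delta>2 t by (intro mult_right_mono) auto
    then show ?thesis unfolding X_def using CLL by argo
  qed
  have X2: "X \<ge> C * L / 4"
  proof -
    have "\<delta> * (t - 1/2) \<ge> 0" using \<delta> t by simp
    then show ?thesis unfolding X_def using CLL by argo
  qed
  have t1: "2 * t - 1 \<ge> 0" using t by simp
  have CL4: "C * L / 4 \<ge> 0" using C L0 by simp
  have expb: "exp (- a * Z powr p) \<le> exp (- (a/2) * (2 * t - 1) powr p) * D powr (- (a/2) * (C/4) powr p)"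
    if Z: "Z \<ge> X" for Z
  proof -
    have "Z powr p \<ge> X powr p" using Z X1 t1 p by (intro powr_mono2) auto
    moreover have "X powr p \<ge> (2 * t - 1) powr p" using X1 t1 p by (intro powr_mono2) auto
    moreover have "X powr p \<ge> (C * L / 4) powr p" using X2 CL4 p by (intro powr_mono2) auto
    moreover have "(C * L / 4) powr p = (C / 4) powr p * ln D"
    proof -
      have "C * L / 4 = (C / 4) * L" by simp
      then show ?thesis using powr_mult[of "C/4" L p] C L0 Lp by simp
    qed
    ultimately have "Z powr p \<ge> (1/2) * (2 * t - 1) powr p + (1/2) * ((C / 4) powr p * ln D)"
      by linarith
    then have "a * Z powr p \<ge> a * ((1/2) * (2 * t - 1) powr p + (1/2) * ((C / 4) powr p * ln D))"
      using a by (intro mult_left_mono) auto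
    then have "a * Z powr p \<ge> (a/2) * (2 * t - 1) powr p + (a/2) * ((C / 4) powr p * ln D)"
      by (simp add: algebra_simps)
    then have "exp (- a * Z powr p) \<le> exp (- (a/2) * (2 * t - 1) powr p + (- (a/2) * (C/4) powr p) * ln D)"
      by simp
    also have "\<dots> = exp (- (a/2) * (2 * t - 1) powr p) * exp ((- (a/2) * (C/4) powr p) * ln D)"
      by (rule exp_add)
    also have "exp ((- (a/2) * (C/4) powr p) * ln D) = D powr (- (a/2) * (C/4) powr p)"
      using D unfolding powr_def[of D] by simp
    finally show ?thesis .
  qed
  have "F \<le> sqrt \<delta> * A * (exp (- a * (\<delta> * \<bar>(\<xi> + s) - q\<bar>) powr p) + exp (- a * (\<delta> * \<bar>(\<xi> + s) + q\<bar>) powr p))"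
    using F unfolding q_def .
  also have "\<dots> \<le> sqrt D * A * (2 * (exp (- (a/2) * (2 * t - 1) powr p) * D powr (- (a/2) * (C/4) powr p)))"
    using expb[OF Zge(1)] expb[OF Zge(2)] \<delta> A
    by (intro mult_mono) (auto intro!: add_nonneg_nonneg)
  finally show ?thesis by (simp add: algebra_simps)
qed


lemma final_arith:
  fixes D t \<sigma> F A K E1 E2 N1 T1 T2 :: real and n M :: nat
  assumes D: "D \<ge> 2" and t: "t > 1/2" and T: "T1 \<ge> 0" "T2 \<ge> 0"
    and M: "real M \<ge> n + 2 + T1" "real M \<ge> T2"
    and A: "A > 0" and K: "K > 0" and E1: "E1 \<ge> 0"
    and \<sigma>: "\<sigma> = 1 / (4 * (real n + 1) * D ^ M * (2 * t) ^ M)"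
    and E2: "E2 = D powr (- N1)" and N1: "N1 \<ge> n * M + 1/2 + T1"
    and KE: "(2 * t) powr (n * M + T2) * E1 \<le> K"
    and F: "\<sigma> ^ n * F \<le> 2 ^ n * (2 * sqrt D * A * E1 * E2) + n * (pi * \<sigma> * D) ^ (n + 1) * (D / 2 + 1 / 2)"
  shows "F \<le> ((4 * (real n + 1)) ^ n * 2 ^ (n + 1) * A * K + n * pi ^ (n + 1) + 1) / (D powr T1 * t powr T2)"
proof -
  define si where "si = 4 * (real n + 1) * D ^ M * (2 * t) ^ M"
  have Dpos: "D > 0" and tpos: "t > 0" and t2: "2 * t \<ge> 1" using D t by auto
  have si_pos: "si > 0" unfolding si_def using Dpos tpos by simp
  have \<sigma>si: "\<sigma> = 1 / si" unfolding si_def \<sigma> ..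
  have \<sigma>pos: "\<sigma> > 0" using si_pos \<sigma>si by simp
  define u where "u = D powr (- T1)"
  define v where "v = t powr (- T2)"
  have upos: "u > 0" "v > 0" unfolding u_def v_def using Dpos tpos by auto
  have goal_rhs: "((4 * (real n + 1)) ^ n * 2 ^ (n + 1) * A * K + n * pi ^ (n + 1) + 1) / (D powr T1 * t powr T2)
      = ((4 * (real n + 1)) ^ n * 2 ^ (n + 1) * A * K + n * pi ^ (n + 1) + 1) * u * v"
    unfolding u_def v_def using Dpos tpos by (simp add: powr_minus divide_simps)
  have Fle: "F \<le> si ^ n * (2 ^ n * (2 * sqrt D * A * E1 * E2)) + si ^ n * (n * (pi * \<sigma> * D) ^ (n + 1) * (D / 2 + 1 / 2))"
  proof -
    have "si ^ n * (\<sigma> ^ n * F) \<le> si ^ n * (2 ^ n * (2 * sqrt D * A * E1 * E2) + n * (pi * \<sigma> * D) ^ (n + 1) * (D / 2 + 1 / 2))"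
      using F si_pos by (intro mult_left_mono) auto
    moreover have "si ^ n * (\<sigma> ^ n * F) = F" using si_pos \<sigma>si by (simp add: power_one_over mult.assoc[symmetric] power_mult_distrib[symmetric])
    ultimately show ?thesis by (simp add: distrib_left)
  qed
  have P1: "(D ^ M) ^ n * sqrt D * E2 \<le> u"
  proof -
    have "(D ^ M) ^ n * sqrt D * E2 = D powr (real M * n + 1/2 - N1)"
    proof -
      have "(D ^ M) ^ n = D powr (real M * n)" using Dpos
        by (metis of_nat_mult power_mult powr_realpow)
      moreover have "sqrt D = D powr (1/2)" using Dpos by (simp add: powr_half_sqrt)
      ultimately have "(D ^ M) ^ n * sqrt D * E2 = D powr (real M * n) * D powr (1/2) * D powr (- N1)" unfolding E2 by simp
      also have "\<dots> = D powr (real M * n + 1/2 + (- N1))" by (simp only: powr_add)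
      finally show ?thesis by simp
    qed
    also have "\<dots> \<le> D powr (- T1)" using D N1 by (intro powr_mono) (auto simp: algebra_simps)
    finally show ?thesis unfolding u_def .
  qed
  have v2: "(2 * t) powr (- T2) \<le> v"
  proof -
    have "(2 * t) powr (- T2) = 2 powr (- T2) * t powr (- T2)" using tpos by (simp add: powr_mult)
    also have "\<dots> \<le> 1 * t powr (- T2)" using T by (intro mult_right_mono) (auto simp: powr_minus divide_simps ge_one_powr_ge_zero)
    finally show ?thesis unfolding v_def by simp
  qed
  have P2: "((2 * t) ^ M) ^ n * E1 \<le> K * v"
  proof -
    have "((2 * t) ^ M) ^ n = (2 * t) powr (real M * n)" using tpos
      by (metis of_nat_mult power_mult powr_realpow mult_pos_pos zero_less_numeral)
    also have "\<dots> = (2 * t) powr (n * M + T2) * (2 * t) powr (- T2)"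
      by (simp add: powr_add[symmetric] mult.commute)
    finally have "((2 * t) ^ M) ^ n * E1 = ((2 * t) powr (n * M + T2) * E1) * (2 * t) powr (- T2)" by simp
    also have "\<dots> \<le> K * (2 * t) powr (- T2)" using KE by (intro mult_right_mono) auto
    also have "\<dots> \<le> K * v" using v2 K by (intro mult_left_mono) auto
    finally show ?thesis .
  qed
  have T1b: "si ^ n * (2 ^ n * (2 * sqrt D * A * E1 * E2)) \<le> (4 * (real n + 1)) ^ n * 2 ^ (n + 1) * A * K * u * v"
  proof -
    have "si ^ n * (2 ^ n * (2 * sqrt D * A * E1 * E2)) = (4 * (real n + 1)) ^ n * 2 ^ (n + 1) * A * (((D ^ M) ^ n * sqrt D * E2) * (((2 * t) ^ M) ^ n * E1))"
    proof -
      have "si ^ n = (4 * (real n + 1)) ^ n * (D ^ M) ^ n * ((2 * t) ^ M) ^ n" unfolding si_def by (simp only: power_mult_distrib)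
      then show ?thesis by (simp add: power_add ac_simps)
    qed
    also have "\<dots> \<le> (4 * (real n + 1)) ^ n * 2 ^ (n + 1) * A * (u * (K * v))"
      using A E1 tpos upos by (intro mult_left_mono[OF mult_mono[OF P1 P2]]) auto
    finally show ?thesis by (simp add: algebra_simps)
  qed
  have T2b: "si ^ n * (n * (pi * \<sigma> * D) ^ (n + 1) * (D / 2 + 1 / 2)) \<le> n * pi ^ (n + 1) * u * v"
  proof -
    have "si ^ n * (n * (pi * \<sigma> * D) ^ (n + 1) * (D / 2 + 1 / 2)) = n * pi ^ (n + 1) * ((si * \<sigma>) ^ n * (\<sigma> * D ^ (n + 1) * (D / 2 + 1 / 2)))"
      by (simp add: power_mult_distrib algebra_simps)
    also have "(si * \<sigma>) ^ n = 1" using \<sigma>si si_pos by simp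
    finally have eq: "si ^ n * (n * (pi * \<sigma> * D) ^ (n + 1) * (D / 2 + 1 / 2)) = n * pi ^ (n + 1) * (\<sigma> * D ^ (n + 1) * (D / 2 + 1 / 2))" by simp
    have le1: "\<sigma> * D ^ (n + 1) * (D / 2 + 1 / 2) \<le> \<sigma> * D ^ (n + 1) * D"
      using D \<sigma>pos by (intro mult_left_mono) auto
    have le2: "\<sigma> * D ^ (n + 1) * D \<le> u * v"
    proof -
      have "\<sigma> * D ^ (n + 1) * D = (D ^ (n + 2) / D ^ M) * (1 / (2 * t) ^ M) / (4 * (real n + 1))"
        unfolding \<sigma> by (simp add: field_simps)
      also have "\<dots> \<le> (D ^ (n + 2) / D ^ M) * (1 / (2 * t) ^ M)"
        using Dpos tpos by (simp add: divide_le_eq)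
      also have "\<dots> \<le> u * v"
      proof (rule mult_mono)
        have "D ^ (n + 2) / D ^ M = D powr (real (n + 2) - real M)"
          using Dpos by (simp only: powr_diff powr_realpow)
        also have "\<dots> \<le> u" unfolding u_def using D M by (intro powr_mono) auto
        finally show "D ^ (n + 2) / D ^ M \<le> u" .
        have "1 / (2 * t) ^ M = (2 * t) powr (- real M)"
          using tpos by (simp add: powr_minus powr_realpow divide_simps)
        also have "\<dots> \<le> (2 * t) powr (- T2)" using t2 M by (intro powr_mono) auto
        also have "\<dots> \<le> v" by (rule v2)
        finally show "1 / (2 * t) ^ M \<le> v" .
      qed (use upos tpos in auto)
      finally show ?thesis .
    qed
    have "n * pi ^ (n + 1) * (\<sigma> * D ^ (n + 1) * (D / 2 + 1 / 2)) \<le> n * pi ^ (n + 1) * (u * v)"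
      using le1 le2 by (intro mult_left_mono) auto
    then show ?thesis unfolding eq by (simp add: mult.assoc)
  qed
  have "F \<le> ((4 * (real n + 1)) ^ n * 2 ^ (n + 1) * A * K + n * pi ^ (n + 1)) * u * v"
    using Fle T1b T2b by (simp add: algebra_simps)
  also have "\<dots> \<le> ((4 * (real n + 1)) ^ n * 2 ^ (n + 1) * A * K + n * pi ^ (n + 1) + 1) * u * v"
    using upos by simp
  finally show ?thesis unfolding goal_rhs .
qed

lemma aux_cancel: fixes x y z :: real assumes "x > 0" shows "x * (1 / (4 * x * y * z)) = 1 / (4 * y * z)"
  using assms by (cases "y = 0 \<or> z = 0") (auto simp: field_simps)

theorem corollary2:
  fixes \<eta> A a :: real and T1 T2 :: real and n :: nat
  assumes "0 < \<eta>" "\<eta> < 1" "A > 0" "a > 0" "T1 \<ge> 0" "T2 \<ge> 0"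
  shows "\<exists>C c :: real. C > 0 \<and> c > 0 \<and>
    (\<forall>(D::real) (\<Phi> :: 'j \<Rightarrow> nat \<Rightarrow> real \<Rightarrow> complex) (\<delta> :: 'j \<Rightarrow> real).
      D \<ge> 2
      \<and> (\<forall>j \<kappa>. smooth_fun (\<Phi> j \<kappa>))
      \<and> (\<forall>j \<kappa> x. \<bar>x\<bar> > D / 2 \<longrightarrow> \<Phi> j \<kappa> x = 0)
      \<and> (\<forall>j \<kappa>. integral UNIV (\<lambda>x. (cmod (\<Phi> j \<kappa> x))\<^sup>2) = 1)
      \<and> (\<forall>j. 0 < \<delta> j \<and> \<delta> j \<le> D)
      \<and> (\<forall>j \<kappa> \<xi>. cmod (fourier (\<Phi> j \<kappa>) \<xi>) \<le>
            sqrt (\<delta> j) * A *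
              (exp (- a * (\<delta> j * \<bar>\<xi> - (2 * real \<kappa> + 1) / (4 * \<delta> j)\<bar>) powr (1 - \<eta>))
             + exp (- a * (\<delta> j * \<bar>\<xi> + (2 * real \<kappa> + 1) / (4 * \<delta> j)\<bar>) powr (1 - \<eta>))))
      \<longrightarrow> (\<forall>j \<kappa> \<xi>. real \<kappa> < \<delta> j - C * (ln D) powr (1 / (1 - \<eta>)) \<and> \<bar>\<xi>\<bar> > 1 / 2 \<longrightarrow>
            cmod (higher_vderiv n (fourier (\<Phi> j \<kappa>)) \<xi>) \<le> c / (D powr T1 * \<bar>\<xi>\<bar> powr T2)))"
proof -
  note \<eta> = assms(1,2) and A = assms(3) and a = assms(4) and T = assms(5,6)
  have p: "1 - \<eta> > 0" using \<eta> by simp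
  define M :: nat where "M = nat \<lceil>real n + 2 + T1 + T2\<rceil> + 1"
  have M: "real M \<ge> n + 2 + T1" "real M \<ge> T2" "M \<ge> 1"
    unfolding M_def using T by (auto, linarith+)
  define N1 where "N1 = real n * real M + 1/2 + T1"
  have N1: "N1 > 0" unfolding N1_def using T by (intro add_pos_nonneg add_nonneg_pos) auto
  define C where "C = 2 / (ln 2 powr (1 / (1 - \<eta>))) + 4 * (2 * N1 / a) powr (1 / (1 - \<eta>))"
  have l2: "ln 2 powr (1 / (1 - \<eta>)) > 0" by simp
  have Cpos: "C > 0" unfolding C_def using l2 by (intro add_pos_nonneg) auto
  have CN: "(a/2) * (C/4) powr (1 - \<eta>) \<ge> N1"
  proof -
    have "C / 4 \<ge> (2 * N1 / a) powr (1 / (1 - \<eta>))" unfolding C_def using l2 by simp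
    then have "(C / 4) powr (1 - \<eta>) \<ge> ((2 * N1 / a) powr (1 / (1 - \<eta>))) powr (1 - \<eta>)"
      using p by (intro powr_mono2) auto
    also have "((2 * N1 / a) powr (1 / (1 - \<eta>))) powr (1 - \<eta>) = 2 * N1 / a"
      using p N1 a by (simp add: powr_powr)
    finally have "(C / 4) powr (1 - \<eta>) \<ge> 2 * N1 / a" .
    then have "(a/2) * (C / 4) powr (1 - \<eta>) \<ge> (a/2) * (2 * N1 / a)" using a by (intro mult_left_mono) auto
    then show ?thesis using a by simp
  qed
  have CL: "C * ln D powr (1 / (1 - \<eta>)) \<ge> 2" if D: "D \<ge> 2" for D
  proof -
    have "ln D powr (1 / (1 - \<eta>)) \<ge> ln 2 powr (1 / (1 - \<eta>))"
      using D p by (intro powr_mono2) auto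
    moreover have "C \<ge> 2 / (ln 2 powr (1 / (1 - \<eta>)))" unfolding C_def by simp
    ultimately have "C * ln D powr (1 / (1 - \<eta>)) \<ge> 2 / (ln 2 powr (1 / (1 - \<eta>))) * ln 2 powr (1 / (1 - \<eta>))"
      using l2 Cpos by (intro mult_mono) auto
    then show ?thesis using l2 by simp
  qed
  obtain K where K: "K > 0" "\<And>u. u \<ge> 0 \<Longrightarrow> (1 + u) powr (real n * real M + T2) * exp (- (a/2) * u powr (1 - \<eta>)) \<le> K"
    using exp_poly[of "a/2" "1 - \<eta>" "real n * real M + T2"] a p T by auto
  define c where "c = (4 * (real n + 1)) ^ n * 2 ^ (n + 1) * A * K + n * pi ^ (n + 1) + 1"
  have cpos: "c > 0" unfolding c_def using A K by (intro add_nonneg_pos) auto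
  show ?thesis
  proof (rule exI[of _ C], rule exI[of _ c], intro conjI Cpos cpos allI impI)
    fix D :: real and \<Phi> :: "'j \<Rightarrow> nat \<Rightarrow> real \<Rightarrow> complex" and \<delta> :: "'j \<Rightarrow> real" and j :: 'j and \<kappa> :: nat and \<xi> :: real
    assume H: "D \<ge> 2
      \<and> (\<forall>j \<kappa>. smooth_fun (\<Phi> j \<kappa>))
      \<and> (\<forall>j \<kappa> x. \<bar>x\<bar> > D / 2 \<longrightarrow> \<Phi> j \<kappa> x = 0)
      \<and> (\<forall>j \<kappa>. integral UNIV (\<lambda>x. (cmod (\<Phi> j \<kappa> x))\<^sup>2) = 1)
      \<and> (\<forall>j. 0 < \<delta> j \<and> \<delta> j \<le> D)
      \<and> (\<forall>j \<kappa> \<xi>. cmod (fourier (\<Phi> j \<kappa>) \<xi>) \<le>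
            sqrt (\<delta> j) * A *
              (exp (- a * (\<delta> j * \<bar>\<xi> - (2 * real \<kappa> + 1) / (4 * \<delta> j)\<bar>) powr (1 - \<eta>))
             + exp (- a * (\<delta> j * \<bar>\<xi> + (2 * real \<kappa> + 1) / (4 * \<delta> j)\<bar>) powr (1 - \<eta>))))"
    assume K2: "real \<kappa> < \<delta> j - C * (ln D) powr (1 / (1 - \<eta>)) \<and> \<bar>\<xi>\<bar> > 1 / 2"
    define \<Phi>' where "\<Phi>' = \<Phi> j \<kappa>"
    define R where "R = D / 2"
    define t where "t = \<bar>\<xi>\<bar>"
    have D: "D \<ge> 2" using H by blast
    have Rpos: "R > 0" unfolding R_def using D by simp
    have t: "t > 1/2" using K2 unfolding t_def by simp
    have tpos: "t > 0" using t by simp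
    have \<delta>: "0 < \<delta> j" "\<delta> j \<le> D" using H by blast+
    have \<kappa>: "real \<kappa> < \<delta> j - C * (ln D) powr (1 / (1 - \<eta>))" using K2 by blast
    have supp: "\<And>x. \<bar>x\<bar> > R \<Longrightarrow> \<Phi>' x = 0" unfolding \<Phi>'_def R_def using H by blast
    have sm: "smooth_fun \<Phi>'" unfolding \<Phi>'_def using H by blast
    have cont: "continuous_on UNIV \<Phi>'"
    proof (rule continuous_at_imp_continuous_on, rule ballI)
      fix x :: real
      have "higher_vderiv 0 \<Phi>' differentiable (at x)" using sm unfolding smooth_fun_def by blast
      then have "\<Phi>' differentiable (at x)" unfolding higher_vderiv_def by simp
      then show "isCont \<Phi>' x" by (rule differentiable_imp_continuous_within)
    qed
    have L2: "integral UNIV (\<lambda>x. (cmod (\<Phi>' x))\<^sup>2) = 1" unfolding \<Phi>'_def using H by blast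
    have FB: "\<And>\<xi>. cmod (fourier \<Phi>' \<xi>) \<le>
            sqrt (\<delta> j) * A *
              (exp (- a * (\<delta> j * \<bar>\<xi> - (2 * real \<kappa> + 1) / (4 * \<delta> j)\<bar>) powr (1 - \<eta>))
             + exp (- a * (\<delta> j * \<bar>\<xi> + (2 * real \<kappa> + 1) / (4 * \<delta> j)\<bar>) powr (1 - \<eta>)))"
      unfolding \<Phi>'_def using H by blast
    define \<sigma> where "\<sigma> = 1 / (4 * (real n + 1) * D ^ M * (2 * t) ^ M)"
    have \<sigma>pos: "\<sigma> > 0" unfolding \<sigma>_def using D tpos by simp
    have hv: "higher_vderiv n (fourier \<Phi>') \<xi> = G \<Phi>' R n \<xi>"
      using higher_vderiv_fourier[OF cont supp] by simp
    have est: "\<sigma> ^ n * cmod (G \<Phi>' R n \<xi>) \<le> (\<Sum>k\<le>n. real (n choose k) * cmod (fourier \<Phi>' (\<xi> + real k * \<sigma>)))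
           + n * (2 * pi * \<sigma> * R) ^ (n + 1) * integral {-R..R} (\<lambda>x. cmod (\<Phi>' x))"
      by (rule deriv_estimate[OF cont supp Rpos \<sigma>pos])
    have L1: "integral {-R..R} (\<lambda>x. cmod (\<Phi>' x)) \<le> R + 1/2" by (rule L1_bound[OF cont supp Rpos L2])
    define E1 where "E1 = exp (- (a/2) * (2 * t - 1) powr (1 - \<eta>))"
    define N1' where "N1' = (a/2) * (C/4) powr (1 - \<eta>)"
    define E2 where "E2 = D powr (- N1')"
    have each: "cmod (fourier \<Phi>' (\<xi> + real k * \<sigma>)) \<le> 2 * sqrt D * A * E1 * E2" if k: "k \<le> n" for k
    proof -
      have "real k * \<sigma> \<le> (real n + 1) * \<sigma>" using k \<sigma>pos by (intro mult_right_mono) auto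
      also have "(real n + 1) * \<sigma> = 1 / (4 * D ^ M * (2 * t) ^ M)" unfolding \<sigma>_def by (rule aux_cancel) simp
      also have "\<dots> \<le> 1 / (4 * D)"
      proof -
        have "D \<le> D ^ M" using D M(3) by (metis le_less_trans less_one not_le numeral_le_one_iff power_increasing_iff power_one_right semiring_norm(69) order_less_imp_le one_less_numeral_iff)
        moreover have "1 \<le> (2 * t) ^ M" using t by (intro one_le_power) simp
        ultimately have "4 * D \<le> 4 * D ^ M * (2 * t) ^ M" using D
          by (metis mult_le_cancel_left_pos mult_mono' mult.assoc mult.right_neutral zero_less_numeral order_trans less_imp_le zero_le_numeral
              one_le_numeral dual_order.trans le_numeral_extra(1))
        then show ?thesis using D tpos by (intro divide_left_mono) auto
      qed
      finally have s: "real k * \<sigma> \<le> 1 / (4 * D)" .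
      show ?thesis
        using claimA[OF D \<delta> p a A Cpos CL[OF D] \<kappa> _ t _ s FB[of "\<xi> + real k * \<sigma>"]] \<sigma>pos t_def
        unfolding E1_def E2_def N1'_def by (simp add: mult.assoc)
    qed
    have sumB: "(\<Sum>k\<le>n. real (n choose k) * cmod (fourier \<Phi>' (\<xi> + real k * \<sigma>))) \<le> 2 ^ n * (2 * sqrt D * A * E1 * E2)"
    proof -
      have "(\<Sum>k\<le>n. real (n choose k) * cmod (fourier \<Phi>' (\<xi> + real k * \<sigma>))) \<le> (\<Sum>k\<le>n. real (n choose k) * (2 * sqrt D * A * E1 * E2))"
        using each by (intro sum_mono mult_left_mono) auto
      also have "\<dots> = real (\<Sum>k\<le>n. n choose k) * (2 * sqrt D * A * E1 * E2)"
        by (simp add: sum_distrib_right)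
      also have "\<dots> = 2 ^ n * (2 * sqrt D * A * E1 * E2)" by (simp add: choose_row_sum)
      finally show ?thesis .
    qed
    have F: "\<sigma> ^ n * cmod (G \<Phi>' R n \<xi>) \<le> 2 ^ n * (2 * sqrt D * A * E1 * E2) + n * (pi * \<sigma> * D) ^ (n + 1) * (D / 2 + 1 / 2)"
    proof -
      define Q where "Q = real n * (pi * \<sigma> * D) ^ (n + 1)"
      have e: "real n * (2 * pi * \<sigma> * R) ^ (n + 1) = Q" unfolding R_def Q_def by (simp add: mult.assoc)
      have Q0: "Q \<ge> 0" unfolding Q_def using \<sigma>pos D by simp
      have "Q * integral {-R..R} (\<lambda>x. cmod (\<Phi>' x)) \<le> Q * (R + 1/2)"
        using L1 Q0 by (intro mult_left_mono) auto
      moreover have "Q * (R + 1/2) = real n * (pi * \<sigma> * D) ^ (n + 1) * (D / 2 + 1 / 2)" unfolding Q_def R_def by simp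
      moreover note est[unfolded e]
      ultimately show ?thesis using sumB by linarith
    qed
    have KE: "(2 * t) powr (real n * real M + T2) * E1 \<le> K"
      using K(2)[of "2 * t - 1"] t unfolding E1_def by simp
    have "cmod (G \<Phi>' R n \<xi>) \<le> ((4 * (real n + 1)) ^ n * 2 ^ (n + 1) * A * K + n * pi ^ (n + 1) + 1) / (D powr T1 * t powr T2)"
      by (rule final_arith[OF D t T M(1) M(2) A K(1) _ \<sigma>_def E2_def _ _ F])
         (use CN KE in \<open>auto simp: E1_def N1_def N1'_def\<close>)
    then show "cmod (higher_vderiv n (fourier (\<Phi> j \<kappa>)) \<xi>) \<le> c / (D powr T1 * \<bar>\<xi>\<bar> powr T2)"
      using hv unfolding \<Phi>'_def c_def t_def by simp
  qed
qed

end
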